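(* In a finite dynamic game as described in the context, suppose $K^i$ is unilaterally sufficient information for player $i$, with associated functions $F_t^{i,g^i}$. Let $g=(g^j)_{j\in\mathcal{I}}$ be a fully mixed behavioral strategy profile and let $\rho^i$ be the $K^i$-based strategy $$\rho_t^i(u_t^i\mid k_t^i)=\sum_{\tilde h_t^i}g_t^i(u_t^i\mid\tilde h_t^i)\,F_t^{i,g^i}(\tilde h_t^i\mid k_t^i).$$ Then for every $j\in\mathcal{I}\setminus\{i\}$ and all $h_t^j\in\mathcal{H}_t^j$, $u_t^j\in\mathcal{U}_t^j$ (for which the conditional quantities are defined): (1) $\Pr^g(\tilde h_{t+1}^j\mid h_t^j,u_t^j)=\Pr^{\rho^i,g^{-i}}(\tilde h_{t+1}^j\mid h_t^j,u_t^j)$ for all $t<T$ and all $\tilde h_{t+1}^j$; and (2) $\mathbb{E}^g[R_t^j\mid h_t^j,u_t^j]=\mathbb{E}^{\rho^i,g^{-i}}[R_t^j\mid h_t^j,u_t^j]$ for all $t$.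
   Context: Game model: finite set of players $\mathcal{I}$, times $\mathcal{T}=\{1,\dots,T\}$. At time $t$ each player $i$ takes action $U_t^i\in\mathcal{U}_t^i$, obtains reward $R_t^i\in[-1,1]$ and learns new information $Z_t^i\in\mathcal{Z}_t^i$. There is a state $X_t\in\mathcal{X}_t$ with $(X_{t+1},Z_t,R_t)=f_t(X_t,U_t,W_t)$ for fixed functions $f_t$. Primitive random variables $(X_1,H_1)$ and $W_1,\dots,W_T$ are mutually independent with commonly known distributions. All sets are finite. Perfect recall: $H_t^i=(H_1^i,Z_{1:t-1}^i)\in\mathcal{H}_t^i$, and $U_t^i$ is a component of $Z_t^i$. Behavioral strategy $g_t^i:\mathcal{H}_t^i\to\Delta(\mathcal{U}_t^i)$; a profile is fully mixed if every action has positive probability at every history. A realization is admissible under $g$ if it has positive probability under $g$. Compression: $K_1^i=\iota_1^i(H_1^i)$, $K_t^i=\iota_t^i(K_{t-1}^i,Z_{t-1}^i)$ for fixed maps, finite value sets $\mathcal{K}_t^i$; $k_t^i$ is the compression of $h_t^i$; a $K^i$-based strategy has $\rho_t^i:\mathcal{K}_t^i\to\Delta(\mathcal{U}_t^i)$. Unilaterally sufficient information (USI): $K^i$ is USI for player $i$ if there exist $F_t^{i,g^i}:\mathcal{K}_t^i\to\Delta(\mathcal{H}_t^i)$ depending only on $g^i$ and $\Phi_t^{i,g^{-i}}:\mathcal{K}_t^i\to\Delta(\mathcal{X}_t\times\mathcal{H}_t^{-i})$ depending only on $g^{-i}$ with $\Pr^g(x_t,h_t\mid k_t^i)=F_t^{i,g^i}(h_t^i\mid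 k_t^i)\Phi_t^{i,g^{-i}}(x_t,h_t^{-i}\mid k_t^i)$ for all behavioral profiles $g$, all $t$, all $k_t^i$ admissible under $g$ (with $x_t,h_t^i,h_t^{-i}$ ranging independently; the left side is $0$ if they disagree on shared components). *)

theory Defs
  imports "HOL-Probability.Probability"
begin

text \<open>
  Time steps are 1..T.
  A history of player i at time t is (H_1^i, [Z_1^i,...,Z_{t-1}^i]).
  The game dynamics f t x u w = (X_{t+1}, Z_t, R_t).
  P1 is the joint distribution of (X_1, H_1); W t is the distribution of W_t;
  primitive random variables are independent by construction of the trajectory distribution.
\<close>

type_synonym ('h1, 'z) hist = "'h1 \<times> 'z list"

definition Hset :: "nat \<Rightarrow> ('h1, 'z) hist set" where
  "Hset t = {h. length (snd h) = t - 1}"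

definition step ::
  "(nat \<Rightarrow> 'x \<Rightarrow> ('i::finite \<Rightarrow> 'u) \<Rightarrow> 'w \<Rightarrow> 'x \<times> ('i \<Rightarrow> 'z) \<times> ('i \<Rightarrow> real))
   \<Rightarrow> (nat \<Rightarrow> 'w pmf)
   \<Rightarrow> ('i \<Rightarrow> nat \<Rightarrow> ('h1, 'z) hist \<Rightarrow> 'u pmf)
   \<Rightarrow> nat \<Rightarrow> 'x \<times> ('i \<Rightarrow> ('h1, 'z) hist)
   \<Rightarrow> ('x \<times> ('i \<Rightarrow> ('h1, 'z) hist) \<times> ('i \<Rightarrow> 'u) \<times> ('i \<Rightarrow> real) \<times> 'x \<times> ('i \<Rightarrow> ('h1, 'z) hist)) pmf"
  where
  "step f W g t c =
     (case c of (x, h) \<Rightarrow>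
       bind_pmf (Pi_pmf UNIV undefined (\<lambda>i. g i t (h i))) (\<lambda>u.
       bind_pmf (W t) (\<lambda>w.
         (case f t x u w of (x', z, r) \<Rightarrow>
            return_pmf (x, h, u, r, x', \<lambda>i. (fst (h i), snd (h i) @ [z i]))))))"

text \<open>Distribution of the configuration (X_{n+1}, H_{n+1}) under profile g.\<close>
fun cfg ::
  "('x \<times> ('i::finite \<Rightarrow> 'h1)) pmf
   \<Rightarrow> (nat \<Rightarrow> 'x \<Rightarrow> ('i \<Rightarrow> 'u) \<Rightarrow> 'w \<Rightarrow> 'x \<times> ('i \<Rightarrow> 'z) \<times> ('i \<Rightarrow> real))
   \<Rightarrow> (nat \<Rightarrow> 'w pmf)
   \<Rightarrow> ('i \<Rightarrow> nat \<Rightarrow> ('h1, 'z) hist \<Rightarrow> 'u pmf)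
   \<Rightarrow> nat \<Rightarrow> ('x \<times> ('i \<Rightarrow> ('h1, 'z) hist)) pmf" where
  "cfg P1 f W g 0 = map_pmf (\<lambda>(x, h1). (x, \<lambda>i. (h1 i, []))) P1"
| "cfg P1 f W g (Suc n) =
     map_pmf (\<lambda>(x, h, u, r, x', h'). (x', h')) (bind_pmf (cfg P1 f W g n) (step f W g (Suc n)))"

definition config where
  "config P1 f W g t = cfg P1 f W g (t - 1)"

definition stepd where
  "stepd P1 f W g t = bind_pmf (config P1 f W g t) (step f W g t)"

definition behavioral ::
  "('i \<Rightarrow> nat \<Rightarrow> 'u set) \<Rightarrow> nat \<Rightarrow> ('i \<Rightarrow> nat \<Rightarrow> ('h1, 'z) hist \<Rightarrow> 'u pmf) \<Rightarrow> bool" where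
  "behavioral Uset T g \<longleftrightarrow>
     (\<forall>i t h. t \<in> {1..T} \<longrightarrow> h \<in> Hset t \<longrightarrow> set_pmf (g i t h) \<subseteq> Uset i t)"

definition fully_mixed ::
  "('i \<Rightarrow> nat \<Rightarrow> 'u set) \<Rightarrow> nat \<Rightarrow> ('i \<Rightarrow> nat \<Rightarrow> ('h1, 'z) hist \<Rightarrow> 'u pmf) \<Rightarrow> bool" where
  "fully_mixed Uset T g \<longleftrightarrow> behavioral Uset T g \<and>
     (\<forall>i t h u. t \<in> {1..T} \<longrightarrow> h \<in> Hset t \<longrightarrow> u \<in> Uset i t \<longrightarrow> pmf (g i t h) u > 0)"

text \<open>Compression: K_1 = iota1 H_1, K_{s+1} = iota (s+1) K_s Z_s.\<close>
definition compress ::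
  "('i \<Rightarrow> 'h1 \<Rightarrow> 'k) \<Rightarrow> ('i \<Rightarrow> nat \<Rightarrow> 'k \<Rightarrow> 'z \<Rightarrow> 'k) \<Rightarrow> 'i \<Rightarrow> ('h1, 'z) hist \<Rightarrow> 'k" where
  "compress iota1 iota i h =
     foldl (\<lambda>k (s, z). iota i (s + 1) k z) (iota1 i (fst h)) (zip [1..<length (snd h) + 1] (snd h))"

text \<open>Unilaterally sufficient information for player i, with witnesses F (a function of g^i)
  and Phi (a function of g^{-i}, i.e. of the profile restricted to the other players).\<close>
definition USI ::
  "('x \<times> ('i::finite \<Rightarrow> 'h1)) pmf
   \<Rightarrow> (nat \<Rightarrow> 'x \<Rightarrow> ('i \<Rightarrow> 'u) \<Rightarrow> 'w \<Rightarrow> 'x \<times> ('i \<Rightarrow> 'z) \<times> ('i \<Rightarrow> real))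
   \<Rightarrow> (nat \<Rightarrow> 'w pmf) \<Rightarrow> ('i \<Rightarrow> nat \<Rightarrow> 'u set) \<Rightarrow> nat
   \<Rightarrow> ('i \<Rightarrow> 'h1 \<Rightarrow> 'k) \<Rightarrow> ('i \<Rightarrow> nat \<Rightarrow> 'k \<Rightarrow> 'z \<Rightarrow> 'k) \<Rightarrow> 'i
   \<Rightarrow> ((nat \<Rightarrow> ('h1, 'z) hist \<Rightarrow> 'u pmf) \<Rightarrow> nat \<Rightarrow> 'k \<Rightarrow> ('h1, 'z) hist pmf)
   \<Rightarrow> (('i \<Rightarrow> nat \<Rightarrow> ('h1, 'z) hist \<Rightarrow> 'u pmf) \<Rightarrow> nat \<Rightarrow> 'k \<Rightarrow> ('x \<times> ('i \<Rightarrow> ('h1, 'z) hist)) pmf)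
   \<Rightarrow> bool" where
  "USI P1 f W Uset T iota1 iota i F Phi \<longleftrightarrow>
     (\<forall>g. behavioral Uset T g \<longrightarrow>
       (\<forall>t \<in> {1..T}. \<forall>k.
          set_pmf (config P1 f W g t) \<inter> {c. compress iota1 iota i (snd c i) = k} \<noteq> {} \<longrightarrow>
          (\<forall>x h. pmf (cond_pmf (config P1 f W g t) {c. compress iota1 iota i (snd c i) = k}) (x, h)
                 = pmf (F (g i) t k) (h i) * pmf (Phi (restrict g (- {i})) t k) (x, restrict h (- {i})))))"

end

theory Submission
  imports Defs
begin

lemma set_step:
  assumes "\<omega> \<in> set_pmf (step f W g t c)"
  shows "fst \<omega> = fst c \<and> fst (snd \<omega>) = snd c \<and>
    (\<exists>z. snd (snd (snd (snd (snd \<omega>)))) = (\<lambda>l. (fst (snd c l), snd (snd c l) @ [z l])))"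
proof -
  obtain x h where c: "c = (x, h)" by (cases c)
  from assms obtain u w where "\<omega> \<in> set_pmf (case f t x u w of (x', z, r) \<Rightarrow>
            return_pmf (x, h, u, r, x', \<lambda>i. (fst (h i), snd (h i) @ [z i])))"
    by (auto simp: step_def c)
  moreover obtain x' z r where "f t x u w = (x', z, r)" by (cases "f t x u w")
  ultimately show ?thesis by (auto simp: c)
qed

lemma cfg_len:
  "c \<in> set_pmf (cfg P1 f W g n) \<Longrightarrow> length (snd (snd c l)) = n"
proof (induction n arbitrary: c)
  case 0 then show ?case by auto
next
  case (Suc n)
  from Suc.prems obtain c0 \<omega> where c0: "c0 \<in> set_pmf (cfg P1 f W g n)"
    and om: "\<omega> \<in> set_pmf (step f W g (Suc n) c0)" and c: "c = (fst (snd (snd (snd (snd \<omega>)))), snd (snd (snd (snd (snd \<omega>)))))"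
    by (auto split: prod.splits)
  then show ?case using Suc.IH[OF c0] set_step[OF om] by auto
qed

lemma compress_snoc:
  "compress iota1 iota i (a, zs @ [z]) = iota i (length zs + 2) (compress iota1 iota i (a, zs)) z"
proof -
  have "[1..<length (zs @ [z]) + 1] = [1..<length zs + 1] @ [length zs + 1]" by simp
  then show ?thesis by (simp add: compress_def del: upt_Suc)
qed

lemma pmf_map_Pair:
  "pmf (map_pmf (Pair a) q) (b, u) = (if a = b then pmf q u else 0)"
proof (cases "a = b")
  case True
  then show ?thesis using pmf_map_inj'[of "Pair a" q u] by (simp add: inj_on_def)
next
  case False
  then show ?thesis by (auto simp: pmf_eq_0_set_pmf)
qed

definition prj :: "'i \<Rightarrow> ('h \<Rightarrow> 'k) \<Rightarrow> 'x \<times> ('i \<Rightarrow> 'h) \<Rightarrow> 'x \<times> ('i \<Rightarrow> 'h) \<times> 'k" where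
  "prj i \<kappa> c = (fst c, restrict (snd c) (-{i}), \<kappa> (snd c i))"

lemma key_gen:
  fixes C :: "('x \<times> ('i \<Rightarrow> 'h)) pmf" and \<kappa> :: "'h \<Rightarrow> 'k"
  assumes H: "\<And>k x h. set_pmf C \<inter> {c. \<kappa> (snd c i) = k} \<noteq> {} \<Longrightarrow>
      pmf (cond_pmf C {c. \<kappa> (snd c i) = k}) (x, h) = pmf (Fk k) (h i) * pmf (Ph k) (x, restrict h (-{i}))"
  shows "\<exists>a. \<forall>\<psi>. (\<integral>\<^sup>+c. indicator {c. prj i \<kappa> c = p} c * \<psi> (snd c i) \<partial>C) = a * (\<integral>\<^sup>+hi. \<psi> hi \<partial>Fk (snd (snd p)))"
proof (cases "\<exists>c0. prj i \<kappa> c0 = p")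
  case False
  then have "\<And>c. indicator {c. prj i \<kappa> c = p} c = (0::ennreal)" by auto
  then show ?thesis by (intro exI[of _ 0]) simp
next
  case True
  then obtain c0 where c0: "prj i \<kappa> c0 = p" by blast
  obtain x0 hr0 k0 where p: "p = (x0, hr0, k0)" by (cases p)
  define e where "e = (\<lambda>hi. (x0, (snd c0)(i := hi)))"
  have r0: "restrict ((snd c0)(i := hi)) (-{i}) = hr0" for hi
  proof -
    have "restrict ((snd c0)(i := hi)) (-{i}) = restrict (snd c0) (-{i})" by (auto simp: restrict_def)
    then show ?thesis using c0 by (simp add: prj_def p)
  qed
  have prj_e: "prj i \<kappa> (e hi) = p \<longleftrightarrow> \<kappa> hi = k0" for hi
    using c0 r0 by (auto simp: prj_def e_def p)
  have e_inv: "c = e (snd c i)" if "prj i \<kappa> c = p" for c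
  proof -
    have "fst c = x0" and "restrict (snd c) (-{i}) = hr0" using that by (auto simp: prj_def p)
    moreover have "restrict (snd c0) (-{i}) = hr0" using c0 by (auto simp: prj_def p)
    ultimately have "restrict (snd c) (-{i}) = restrict (snd c0) (-{i})" by simp
    then have "snd c l = ((snd c0)(i := snd c i)) l" for l
      by (cases "l = i") (simp_all add: restrict_def fun_eq_iff, metis ComplI singletonD)
    then have sc: "snd c = (snd c0)(i := snd c i)" by (metis ext)
    show ?thesis unfolding e_def using \<open>fst c = x0\<close> sc by (metis prod.collapse)
  qed
  have inj: "inj e" by (auto simp: e_def inj_on_def fun_eq_iff)
  define Pk where "Pk = measure C {c. \<kappa> (snd c i) = k0}"
  define Phv where "Phv = pmf (Ph k0) (x0, hr0)"
  have pmfC: "pmf C (e hi) = Pk * pmf (Fk k0) hi * Phv" if "\<kappa> hi = k0" for hi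
  proof (cases "set_pmf C \<inter> {c. \<kappa> (snd c i) = k0} = {}")
    case True
    then have "e hi \<notin> set_pmf C" using that by (auto simp: e_def)
    moreover have "Pk = 0" using True by (simp add: Pk_def measure_pmf_zero_iff)
    ultimately show ?thesis by (simp add: set_pmf_iff)
  next
    case False
    have "Pk > 0" using False unfolding Pk_def by (auto intro: measure_pmf_posI)
    have "pmf (cond_pmf C {c. \<kappa> (snd c i) = k0}) (e hi) = pmf (Fk k0) hi * Phv"
      using H[OF False, of x0 "(snd c0)(i := hi)"] r0 by (simp add: e_def Phv_def)
    moreover have "pmf (cond_pmf C {c. \<kappa> (snd c i) = k0}) (e hi) = pmf C (e hi) / Pk"
      using that by (subst pmf_cond[OF False]) (auto simp: e_def Pk_def)
    ultimately have "pmf C (e hi) / Pk = pmf (Fk k0) hi * Phv" by simp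
    then have "pmf C (e hi) = Pk * (pmf (Fk k0) hi * Phv)" using \<open>Pk > 0\<close>
      by (simp add: divide_eq_eq mult.commute)
    then show ?thesis by (simp add: mult.assoc)
  qed
  have supp: "Pk * Phv * pmf (Fk k0) hi = 0" if "\<kappa> hi \<noteq> k0" for hi
  proof (cases "set_pmf C \<inter> {c. \<kappa> (snd c i) = k0} = {}")
    case True
    then have "Pk = 0" by (simp add: Pk_def measure_pmf_zero_iff)
    then show ?thesis by simp
  next
    case False
    have "pmf (cond_pmf C {c. \<kappa> (snd c i) = k0}) (e hi) = pmf (Fk k0) hi * Phv"
      using H[OF False, of x0 "(snd c0)(i := hi)"] r0 by (simp add: e_def Phv_def)
    moreover have "pmf (cond_pmf C {c. \<kappa> (snd c i) = k0}) (e hi) = 0"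
      using that by (subst pmf_cond[OF False]) (auto simp: e_def)
    ultimately show ?thesis by auto
  qed
  have Pk0: "Pk \<ge> 0" "Phv \<ge> 0" by (auto simp: Pk_def Phv_def)
  show ?thesis
  proof (intro exI[of _ "ennreal (Pk * Phv)"] allI)
    fix \<psi> :: "'h \<Rightarrow> ennreal"
    have "(\<integral>\<^sup>+c. indicator {c. prj i \<kappa> c = p} c * \<psi> (snd c i) \<partial>C)
       = (\<integral>\<^sup>+c. ennreal (pmf C c) * (indicator {c. prj i \<kappa> c = p} c * \<psi> (snd c i)) \<partial>count_space UNIV)"
      by (rule nn_integral_measure_pmf)
    also have "\<dots> = (\<integral>\<^sup>+c. ennreal (pmf C c) * (indicator {c. prj i \<kappa> c = p} c * \<psi> (snd c i)) \<partial>count_space (range e))"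
    proof (rule nn_integral_count_space_eq)
      fix c assume "c \<in> UNIV - range e"
      then have "prj i \<kappa> c \<noteq> p" using e_inv by (metis DiffD2 rangeI)
      then show "ennreal (pmf C c) * (indicator {c. prj i \<kappa> c = p} c * \<psi> (snd c i)) = 0" by simp
    qed simp
    also have "\<dots> = (\<integral>\<^sup>+hi. ennreal (pmf C (e hi)) * (indicator {c. prj i \<kappa> c = p} (e hi) * \<psi> (snd (e hi) i)) \<partial>count_space UNIV)"
      by (rule nn_integral_bij_count_space[symmetric, OF inj_on_imp_bij_betw[OF inj]])
    also have "\<dots> = (\<integral>\<^sup>+hi. ennreal (Pk * Phv) * (ennreal (pmf (Fk k0) hi) * \<psi> hi) \<partial>count_space UNIV)"
    proof (rule nn_integral_cong)
      fix hi
      show "ennreal (pmf C (e hi)) * (indicator {c. prj i \<kappa> c = p} (e hi) * \<psi> (snd (e hi) i))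
          = ennreal (Pk * Phv) * (ennreal (pmf (Fk k0) hi) * \<psi> hi)"
      proof (cases "\<kappa> hi = k0")
        case True
        have "indicator {c. prj i \<kappa> c = p} (e hi) = (1::ennreal)" using prj_e True by simp
        moreover have "snd (e hi) i = hi" by (simp add: e_def)
        moreover have "pmf C (e hi) = (Pk * Phv) * pmf (Fk k0) hi" using pmfC[OF True] by (simp add: mult_ac)
        then have "ennreal (pmf C (e hi)) = ennreal (Pk * Phv) * ennreal (pmf (Fk k0) hi)"
          using Pk0 by (metis ennreal_mult' mult_nonneg_nonneg)
        ultimately show ?thesis by (simp add: mult.assoc)
      next
        case False
        have "indicator {c. prj i \<kappa> c = p} (e hi) = (0::ennreal)" using prj_e False by simp
        moreover have "ennreal (Pk * Phv) * ennreal (pmf (Fk k0) hi) = 0"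
          using supp[OF False] Pk0 by (metis ennreal_0 ennreal_mult' mult_nonneg_nonneg)
        ultimately show ?thesis by (simp add: mult.assoc[symmetric])
      qed
    qed
    also have "\<dots> = ennreal (Pk * Phv) * (\<integral>\<^sup>+hi. \<psi> hi \<partial>Fk (snd (snd p)))"
      by (subst nn_integral_cmult) (simp_all add: nn_integral_measure_pmf[where f=\<psi>] p)
    finally show "(\<integral>\<^sup>+c. indicator {c. prj i \<kappa> c = p} c * \<psi> (snd c i) \<partial>C) = ennreal (Pk * Phv) * (\<integral>\<^sup>+hi. \<psi> hi \<partial>Fk (snd (snd p)))" .
  qed
qed

lemma J_eq:
  fixes Ca Cb :: "('x \<times> ('i::finite \<Rightarrow> 'h)) pmf" and \<kappa> :: "'h \<Rightarrow> 'k"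
    and G :: "'i \<Rightarrow> 'h \<Rightarrow> 'u pmf" and R :: "'k \<Rightarrow> 'u pmf" and Fk :: "'k \<Rightarrow> 'h pmf"
  assumes H: "\<And>k x h. set_pmf Ca \<inter> {c. \<kappa> (snd c i) = k} \<noteq> {} \<Longrightarrow>
      pmf (cond_pmf Ca {c. \<kappa> (snd c i) = k}) (x, h) = pmf (Fk k) (h i) * pmf (Ph k) (x, restrict h (-{i}))"
    and R: "\<And>k. R k = bind_pmf (Fk k) (G i)"
    and A: "map_pmf (prj i \<kappa>) Ca = map_pmf (prj i \<kappa>) Cb"
  shows "bind_pmf Ca (\<lambda>c. map_pmf (Pair (prj i \<kappa> c)) (Pi_pmf UNIV undefined (\<lambda>l. G l (snd c l))))
       = bind_pmf Cb (\<lambda>c. map_pmf (Pair (prj i \<kappa> c)) (Pi_pmf UNIV undefined (\<lambda>l. (G(i := \<lambda>h. R (\<kappa> h))) l (snd c l))))"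
proof -
  define Q :: "'x \<times> ('i \<Rightarrow> 'h) \<times> 'k \<Rightarrow> ('i \<Rightarrow> 'u) pmf" where "Q = (\<lambda>p. Pi_pmf UNIV undefined (\<lambda>l. if l = i then R (snd (snd p)) else G l (fst (snd p) l)))"
  have Qc: "Pi_pmf UNIV undefined (\<lambda>l. (G(i := \<lambda>h. R (\<kappa> h))) l (snd c l)) = Q (prj i \<kappa> c)" for c
    unfolding Q_def prj_def by (intro arg_cong[where f="Pi_pmf UNIV undefined"]) (auto simp: fun_eq_iff)
  have "bind_pmf Cb (\<lambda>c. map_pmf (Pair (prj i \<kappa> c)) (Pi_pmf UNIV undefined (\<lambda>l. (G(i := \<lambda>h. R (\<kappa> h))) l (snd c l))))
      = bind_pmf (map_pmf (prj i \<kappa>) Cb) (\<lambda>p. map_pmf (Pair p) (Q p))"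
    unfolding Qc by (simp add: bind_map_pmf)
  also have "\<dots> = bind_pmf (map_pmf (prj i \<kappa>) Ca) (\<lambda>p. map_pmf (Pair p) (Q p))"
    by (simp add: A)
  finally have RHS: "bind_pmf Cb (\<lambda>c. map_pmf (Pair (prj i \<kappa> c)) (Pi_pmf UNIV undefined (\<lambda>l. (G(i := \<lambda>h. R (\<kappa> h))) l (snd c l))))
      = bind_pmf (map_pmf (prj i \<kappa>) Ca) (\<lambda>p. map_pmf (Pair p) (Q p))" .
  show ?thesis
    unfolding RHS
  proof (rule pmf_eqI)
    fix pu :: "('x \<times> ('i \<Rightarrow> 'h) \<times> 'k) \<times> ('i \<Rightarrow> 'u)"
    obtain p u where pu: "pu = (p, u)" by (cases pu)
    obtain x0 hr0 k0 where p: "p = (x0, hr0, k0)" by (cases p)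
    define \<Pi>0 where "\<Pi>0 = (\<Prod>l\<in>-{i}. pmf (G l (hr0 l)) (u l))"
    have \<Pi>0_nn: "\<Pi>0 \<ge> 0" unfolding \<Pi>0_def by (intro prod_nonneg) auto
    define \<psi> where "\<psi> = (\<lambda>hi. ennreal (pmf (G i hi) (u i) * \<Pi>0))"
    obtain a where a: "\<And>\<psi>. (\<integral>\<^sup>+c. indicator {c. prj i \<kappa> c = p} c * \<psi> (snd c i) \<partial>Ca) = a * (\<integral>\<^sup>+hi. \<psi> hi \<partial>Fk (snd (snd p)))"
      using key_gen[of Ca \<kappa> i Fk Ph p, OF H] by blast
    have em: "emeasure Ca {c. prj i \<kappa> c = p} = a"
    proof -
      have "emeasure Ca {c. prj i \<kappa> c = p} = (\<integral>\<^sup>+c. indicator {c. prj i \<kappa> c = p} c * (\<lambda>_. 1::ennreal) (snd c i) \<partial>Ca)"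
        by simp
      also have "\<dots> = a * (\<integral>\<^sup>+hi. (\<lambda>_. 1::ennreal) hi \<partial>Fk (snd (snd p)))" by (rule a)
      finally show ?thesis by simp
    qed
    have piU: "pmf (Pi_pmf UNIV undefined D) u = (\<Prod>l\<in>UNIV. pmf (D l) (u l))" for D :: "'i \<Rightarrow> 'u pmf"
      by (rule pmf_Pi') auto
    have prodsplit: "(\<Prod>l\<in>UNIV. pmf (D l) (u l)) = pmf (D i) (u i) * (\<Prod>l\<in>-{i}. pmf (D l) (u l))" for D :: "'i \<Rightarrow> 'u pmf"
      by (subst prod.remove[of UNIV i]) (auto simp: Compl_eq_Diff_UNIV)
    have "ennreal (pmf (bind_pmf Ca (\<lambda>c. map_pmf (Pair (prj i \<kappa> c)) (Pi_pmf UNIV undefined (\<lambda>l. G l (snd c l))))) pu)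
       = (\<integral>\<^sup>+c. indicator {c. prj i \<kappa> c = p} c * \<psi> (snd c i) \<partial>Ca)"
      unfolding ennreal_pmf_bind pu
    proof (rule nn_integral_cong)
      fix c :: "'x \<times> ('i \<Rightarrow> 'h)"
      show "ennreal (pmf (map_pmf (Pair (prj i \<kappa> c)) (Pi_pmf UNIV undefined (\<lambda>l. G l (snd c l)))) (p, u))
          = indicator {c. prj i \<kappa> c = p} c * \<psi> (snd c i)"
      proof (cases "prj i \<kappa> c = p")
        case True
        have "(\<Prod>l\<in>-{i}. pmf (G l (snd c l)) (u l)) = \<Pi>0"
        proof -
          have "restrict (snd c) (-{i}) = hr0" using True by (simp add: prj_def p)
          then have hr: "l \<in> -{i} \<Longrightarrow> snd c l = hr0 l" for l by (metis restrict_apply')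
          show ?thesis unfolding \<Pi>0_def by (intro prod.cong refl) (simp add: hr)
        qed
        then show ?thesis using True
          by (simp add: pmf_map_Pair piU prodsplit \<psi>_def)
      next
        case False
        then show ?thesis by (simp add: pmf_map_Pair)
      qed
    qed
    also have "\<dots> = a * (\<integral>\<^sup>+hi. \<psi> hi \<partial>Fk k0)" using a p by simp
    also have "(\<integral>\<^sup>+hi. \<psi> hi \<partial>Fk k0) = ennreal (pmf (R k0) (u i)) * ennreal \<Pi>0"
      unfolding \<psi>_def R ennreal_pmf_bind using \<Pi>0_nn
      by (simp add: ennreal_mult nn_integral_multc)
    also have "a * (ennreal (pmf (R k0) (u i)) * ennreal \<Pi>0) = ennreal (pmf (Q p) u) * emeasure Ca {c. prj i \<kappa> c = p}"
      unfolding em Q_def using \<Pi>0_nn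
      by (simp add: piU prodsplit p \<Pi>0_def ennreal_mult mult_ac)
    also have "\<dots> = (\<integral>\<^sup>+c. ennreal (pmf (Q p) u) * indicator {c. prj i \<kappa> c = p} c \<partial>Ca)"
      by (simp add: nn_integral_cmult_indicator)
    also have "\<dots> = ennreal (pmf (bind_pmf (map_pmf (prj i \<kappa>) Ca) (\<lambda>p. map_pmf (Pair p) (Q p))) pu)"
      unfolding ennreal_pmf_bind pu nn_integral_map_pmf
      by (intro nn_integral_cong) (auto simp: pmf_map_Pair)
    finally show "pmf (bind_pmf Ca (\<lambda>c. map_pmf (Pair (prj i \<kappa> c)) (Pi_pmf UNIV undefined (\<lambda>l. G l (snd c l))))) pu
        = pmf (bind_pmf (map_pmf (prj i \<kappa>) Ca) (\<lambda>p. map_pmf (Pair p) (Q p))) pu"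
      by (simp add: ennreal_inj)
  qed
qed

definition prjs where
  "prjs i \<kappa> \<omega> = (prj i \<kappa> (fst \<omega>, fst (snd \<omega>)), fst (snd (snd \<omega>)), fst (snd (snd (snd \<omega>))),
      prj i \<kappa> (fst (snd (snd (snd (snd \<omega>)))), snd (snd (snd (snd (snd \<omega>))))))"

definition Gam where
  "Gam f i iota t p u w = (case f t (fst p) u w of (x', z, r) \<Rightarrow>
     (p, u, r, (x', restrict (\<lambda>l. (fst (fst (snd p) l), snd (fst (snd p) l) @ [z l])) (-{i}),
        iota i (t + 1) (snd (snd p)) (z i))))"

lemma map_prjs_stepd:
  assumes "1 \<le> t"
  shows "map_pmf (prjs i (compress iota1 iota i)) (stepd P1 f W g t)
    = bind_pmf (bind_pmf (config P1 f W g t) (\<lambda>c. map_pmf (Pair (prj i (compress iota1 iota i) c))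
          (Pi_pmf UNIV undefined (\<lambda>l. g l t (snd c l)))))
        (\<lambda>pu. map_pmf (Gam f i iota t (fst pu) (snd pu)) (W t))"
  unfolding stepd_def map_bind_pmf bind_assoc_pmf bind_map_pmf
proof (rule bind_pmf_cong[OF refl], goal_cases)
  case (1 c)
  then have c: "c \<in> set_pmf (config P1 f W g t)" by simp
  obtain x h where xh: "c = (x, h)" by (cases c)
  have len: "length (snd (h i)) = t - 1"
    using cfg_len[of c P1 f W g "t - 1" i] c by (simp add: config_def xh)
  have "map_pmf (prjs i (compress iota1 iota i)) (step f W g t c) =
        bind_pmf (Pi_pmf UNIV undefined (\<lambda>l. g l t (snd c l)))
          (\<lambda>x. map_pmf (Gam f i iota t (prj i (compress iota1 iota i) c) x) (W t))"
    unfolding step_def xh prod.case map_bind_pmf fst_conv snd_conv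
  proof (rule bind_pmf_cong[OF refl], goal_cases)
    case (1 u)
    have "map_pmf (prjs i (compress iota1 iota i)) (bind_pmf (W t) (\<lambda>w. case f t x u w of
          (x', z, r) \<Rightarrow> return_pmf (x, h, u, r, x', \<lambda>i. (fst (h i), snd (h i) @ [z i]))))
        = map_pmf (Gam f i iota t (prj i (compress iota1 iota i) (x, h)) u) (W t)"
      (is "?L = ?R")
    proof -
      have "?L = bind_pmf (W t) (\<lambda>w. map_pmf (prjs i (compress iota1 iota i)) (case f t x u w of
          (x', z, r) \<Rightarrow> return_pmf (x, h, u, r, x', \<lambda>i. (fst (h i), snd (h i) @ [z i]))))"
        by (rule map_bind_pmf)
      also have "\<dots> = bind_pmf (W t) (\<lambda>w. return_pmf (Gam f i iota t (prj i (compress iota1 iota i) (x, h)) u w))"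
      proof (rule bind_pmf_cong[OF refl])
      fix w
        obtain x' z r where fe: "f t x u w = (x', z, r)" by (cases "f t x u w")
        have r: "restrict (\<lambda>l. (fst (h l), snd (h l) @ [z l])) (-{i})
            = restrict (\<lambda>l. (fst (restrict h (-{i}) l), snd (restrict h (-{i}) l) @ [z l])) (-{i})"
          by (auto simp: restrict_def fun_eq_iff)
        have cs: "compress iota1 iota i (fst (h i), snd (h i) @ [z i]) = iota i (t + 1) (compress iota1 iota i (h i)) (z i)"
          using compress_snoc[of iota1 iota i "fst (h i)" "snd (h i)" "z i"] len assms by simp
        show "map_pmf (prjs i (compress iota1 iota i)) (case f t x u w of
            (x', z, r) \<Rightarrow> return_pmf (x, h, u, r, x', \<lambda>i. (fst (h i), snd (h i) @ [z i])))
          = return_pmf (Gam f i iota t (prj i (compress iota1 iota i) (x, h)) u w)"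
          unfolding fe by (simp add: prjs_def Gam_def prj_def fe cs r)
      qed
      also have "\<dots> = ?R" by (simp add: map_pmf_def)
      finally show ?thesis .
    qed
    then show ?case by (simp only: map_bind_pmf)
  qed
  then show ?case by simp
qed

lemma config_Suc:
  assumes "1 \<le> t"
  shows "config P1 f W g (Suc t) = map_pmf (\<lambda>\<omega>. (fst (snd (snd (snd (snd \<omega>)))), snd (snd (snd (snd (snd \<omega>)))))) (stepd P1 f W g t)"
proof -
  obtain n where t: "t = Suc n" using assms by (cases t) auto
  show ?thesis unfolding t config_def stepd_def
    by (simp, intro map_pmf_cong) (auto split: prod.splits)
qed

lemma cond_eq:
  assumes M: "map_pmf \<pi> S1 = map_pmf \<pi> S2"
    and n1: "set_pmf S1 \<inter> \<pi> -` B \<noteq> {}" and n2: "set_pmf S2 \<inter> \<pi> -` B \<noteq> {}"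
  shows "measure_pmf.prob (cond_pmf S1 (\<pi> -` B)) (\<pi> -` E) = measure_pmf.prob (cond_pmf S2 (\<pi> -` B)) (\<pi> -` E)"
    and "measure_pmf.expectation (cond_pmf S1 (\<pi> -` B)) (\<lambda>\<omega>. (\<phi> (\<pi> \<omega>) :: real))
       = measure_pmf.expectation (cond_pmf S2 (\<pi> -` B)) (\<lambda>\<omega>. \<phi> (\<pi> \<omega>))"
proof -
  have e1: "map_pmf \<pi> (cond_pmf S1 (\<pi> -` B)) = cond_pmf (map_pmf \<pi> S1) B" using cond_map_pmf[OF n1] by simp
  have e2: "map_pmf \<pi> (cond_pmf S2 (\<pi> -` B)) = cond_pmf (map_pmf \<pi> S2) B" using cond_map_pmf[OF n2] by simp
  have "measure_pmf.prob (cond_pmf S1 (\<pi> -` B)) (\<pi> -` E) = measure_pmf.prob (map_pmf \<pi> (cond_pmf S1 (\<pi> -` B))) E"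
    by simp
  also have "\<dots> = measure_pmf.prob (map_pmf \<pi> (cond_pmf S2 (\<pi> -` B))) E" unfolding e1 e2 M ..
  finally show "measure_pmf.prob (cond_pmf S1 (\<pi> -` B)) (\<pi> -` E) = measure_pmf.prob (cond_pmf S2 (\<pi> -` B)) (\<pi> -` E)"
    by simp
  have "measure_pmf.expectation (cond_pmf S1 (\<pi> -` B)) (\<lambda>\<omega>. \<phi> (\<pi> \<omega>)) = measure_pmf.expectation (map_pmf \<pi> (cond_pmf S1 (\<pi> -` B))) \<phi>"
    by simp
  also have "\<dots> = measure_pmf.expectation (map_pmf \<pi> (cond_pmf S2 (\<pi> -` B))) \<phi>" unfolding e1 e2 M ..
  finally show "measure_pmf.expectation (cond_pmf S1 (\<pi> -` B)) (\<lambda>\<omega>. \<phi> (\<pi> \<omega>))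
       = measure_pmf.expectation (cond_pmf S2 (\<pi> -` B)) (\<lambda>\<omega>. \<phi> (\<pi> \<omega>))" by simp
qed

theorem lemma9:
  fixes P1 :: "('x::finite \<times> ('i::finite \<Rightarrow> 'h1::finite)) pmf"
    and f :: "nat \<Rightarrow> 'x \<Rightarrow> ('i \<Rightarrow> 'u::finite) \<Rightarrow> 'w::finite \<Rightarrow> 'x \<times> ('i \<Rightarrow> 'z::finite) \<times> ('i \<Rightarrow> real)"
    and W :: "nat \<Rightarrow> 'w pmf"
    and Uset :: "'i \<Rightarrow> nat \<Rightarrow> 'u set"
    and act :: "'i \<Rightarrow> nat \<Rightarrow> 'z \<Rightarrow> 'u"
    and T :: nat
    and iota1 :: "'i \<Rightarrow> 'h1 \<Rightarrow> 'k::finite"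
    and iota :: "'i \<Rightarrow> nat \<Rightarrow> 'k \<Rightarrow> 'z \<Rightarrow> 'k"
    and i j :: 'i
    and F :: "(nat \<Rightarrow> ('h1, 'z) hist \<Rightarrow> 'u pmf) \<Rightarrow> nat \<Rightarrow> 'k \<Rightarrow> ('h1, 'z) hist pmf"
    and Phi :: "('i \<Rightarrow> nat \<Rightarrow> ('h1, 'z) hist \<Rightarrow> 'u pmf) \<Rightarrow> nat \<Rightarrow> 'k \<Rightarrow> ('x \<times> ('i \<Rightarrow> ('h1, 'z) hist)) pmf"
    and g :: "'i \<Rightarrow> nat \<Rightarrow> ('h1, 'z) hist \<Rightarrow> 'u pmf"
    and rho :: "nat \<Rightarrow> 'k \<Rightarrow> 'u pmf"
  assumes reward_bound: "\<And>t x u w l. \<bar>snd (snd (f t x u w)) l\<bar> \<le> 1"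
    and action_in_info: "\<And>t x u w l. act l t (fst (snd (f t x u w)) l) = u l"
    and usi: "USI P1 f W Uset T iota1 iota i F Phi"
    and mixed: "fully_mixed Uset T g"
    and rho_def: "\<And>t k. rho t k = bind_pmf (F (g i) t k) (\<lambda>h. g i t h)"
    and ji: "j \<noteq> i"
  shows "(\<forall>t h u h'.
            1 \<le> t \<and> t < T \<and> h \<in> Hset t \<and> u \<in> Uset j t \<and>
            set_pmf (stepd P1 f W g t) \<inter> {\<omega>. fst (snd \<omega>) j = h \<and> fst (snd (snd \<omega>)) j = u} \<noteq> {} \<and>
            set_pmf (stepd P1 f W (g(i := (\<lambda>t h. rho t (compress iota1 iota i h)))) t)
               \<inter> {\<omega>. fst (snd \<omega>) j = h \<and> fst (snd (snd \<omega>)) j = u} \<noteq> {}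
            \<longrightarrow>
            measure_pmf.prob
              (cond_pmf (stepd P1 f W g t) {\<omega>. fst (snd \<omega>) j = h \<and> fst (snd (snd \<omega>)) j = u})
              {\<omega>. snd (snd (snd (snd (snd \<omega>)))) j = h'}
            = measure_pmf.prob
              (cond_pmf (stepd P1 f W (g(i := (\<lambda>t h. rho t (compress iota1 iota i h)))) t)
                 {\<omega>. fst (snd \<omega>) j = h \<and> fst (snd (snd \<omega>)) j = u})
              {\<omega>. snd (snd (snd (snd (snd \<omega>)))) j = h'})
       \<and> (\<forall>t h u.
            1 \<le> t \<and> t \<le> T \<and> h \<in> Hset t \<and> u \<in> Uset j t \<and>
            set_pmf (stepd P1 f W g t) \<inter> {\<omega>. fst (snd \<omega>) j = h \<and> fst (snd (snd \<omega>)) j = u} \<noteq> {} \<and>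
            set_pmf (stepd P1 f W (g(i := (\<lambda>t h. rho t (compress iota1 iota i h)))) t)
               \<inter> {\<omega>. fst (snd \<omega>) j = h \<and> fst (snd (snd \<omega>)) j = u} \<noteq> {}
            \<longrightarrow>
            measure_pmf.expectation
              (cond_pmf (stepd P1 f W g t) {\<omega>. fst (snd \<omega>) j = h \<and> fst (snd (snd \<omega>)) j = u})
              (\<lambda>\<omega>. fst (snd (snd (snd \<omega>))) j)
            = measure_pmf.expectation
              (cond_pmf (stepd P1 f W (g(i := (\<lambda>t h. rho t (compress iota1 iota i h)))) t)
                 {\<omega>. fst (snd \<omega>) j = h \<and> fst (snd (snd \<omega>)) j = u})
              (\<lambda>\<omega>. fst (snd (snd (snd \<omega>))) j))"
proof -
  define \<kappa> where "\<kappa> = compress iota1 iota i"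
  define g2 where "g2 = g(i := (\<lambda>t h. rho t (compress iota1 iota i h)))"
  have beh: "behavioral Uset T g" using mixed by (simp add: fully_mixed_def)
  have Hyp: "\<And>k x h. set_pmf (config P1 f W g t) \<inter> {c. \<kappa> (snd c i) = k} \<noteq> {} \<Longrightarrow>
      pmf (cond_pmf (config P1 f W g t) {c. \<kappa> (snd c i) = k}) (x, h)
        = pmf (F (g i) t k) (h i) * pmf (Phi (restrict g (-{i})) t k) (x, restrict h (-{i}))"
    if "t \<in> {1..T}" for t
    using usi beh that unfolding USI_def \<kappa>_def by blast
  have Jeq: "bind_pmf (config P1 f W g t) (\<lambda>c. map_pmf (Pair (prj i \<kappa> c)) (Pi_pmf UNIV undefined (\<lambda>l. g l t (snd c l))))
     = bind_pmf (config P1 f W g2 t) (\<lambda>c. map_pmf (Pair (prj i \<kappa> c)) (Pi_pmf UNIV undefined (\<lambda>l. g2 l t (snd c l))))"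
    if t: "t \<in> {1..T}"
      and A: "map_pmf (prj i \<kappa>) (config P1 f W g t) = map_pmf (prj i \<kappa>) (config P1 f W g2 t)" for t
  proof -
    have e: "(\<lambda>l. g2 l t (snd c l)) = (\<lambda>l. ((\<lambda>l. g l t)(i := \<lambda>h. rho t (\<kappa> h))) l (snd c l))" for c
      by (auto simp: g2_def \<kappa>_def)
    show ?thesis
      unfolding e
      by (rule J_eq[where Ca="config P1 f W g t" and Cb="config P1 f W g2 t" and \<kappa>=\<kappa> and i=i
            and Fk="F (g i) t" and Ph="Phi (restrict g (-{i})) t" and R="rho t" and G="\<lambda>l. g l t",
            OF Hyp[OF t] rho_def A])
  qed
  have stepeq: "map_pmf (prjs i \<kappa>) (stepd P1 f W g t) = map_pmf (prjs i \<kappa>) (stepd P1 f W g2 t)"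
    if t: "t \<in> {1..T}"
      and A: "map_pmf (prj i \<kappa>) (config P1 f W g t) = map_pmf (prj i \<kappa>) (config P1 f W g2 t)" for t
  proof -
    have t1: "1 \<le> t" using t by simp
    show ?thesis
      unfolding \<kappa>_def map_prjs_stepd[OF t1]
      using Jeq[OF t A] unfolding \<kappa>_def by simp
  qed
  have A: "map_pmf (prj i \<kappa>) (config P1 f W g (Suc n)) = map_pmf (prj i \<kappa>) (config P1 f W g2 (Suc n))"
    if "n \<le> T" for n
    using that
  proof (induction n)
    case 0
    show ?case by (simp add: config_def)
  next
    case (Suc n)
    have t: "Suc n \<in> {1..T}" using Suc.prems by simp
    have IH: "map_pmf (prj i \<kappa>) (config P1 f W g (Suc n)) = map_pmf (prj i \<kappa>) (config P1 f W g2 (Suc n))"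
      using Suc by simp
    have c: "map_pmf (prj i \<kappa>) (config P1 f W gg (Suc (Suc n)))
        = map_pmf (\<lambda>q. snd (snd (snd q))) (map_pmf (prjs i \<kappa>) (stepd P1 f W gg (Suc n)))" for gg
      by (simp add: config_Suc map_pmf_comp prjs_def)
    show ?case unfolding c using stepeq[OF t IH] by simp
  qed
  have main: "map_pmf (prjs i \<kappa>) (stepd P1 f W g t) = map_pmf (prjs i \<kappa>) (stepd P1 f W g2 t)"
    if "1 \<le> t" "t \<le> T" for t
  proof -
    have "Suc (t - 1) = t" using that by simp
    then show ?thesis using stepeq[of t] A[of "t - 1"] that by simp
  qed
  have ji': "j \<in> -{i}" using ji by simp
  have evt: "{\<omega>. fst (snd \<omega>) j = h \<and> fst (snd (snd \<omega>)) j = u}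
      = prjs i \<kappa> -` {q. fst (snd (fst q)) j = h \<and> fst (snd q) j = u}" for h :: "('h1, 'z) hist" and u :: 'u
    using ji by (auto simp: prjs_def prj_def)
  have evt2: "{\<omega>. snd (snd (snd (snd (snd \<omega>)))) j = h'}
      = prjs i \<kappa> -` {q. fst (snd (snd (snd (snd q)))) j = h'}" for h' :: "('h1, 'z) hist"
    using ji by (auto simp: prjs_def prj_def)
  have rew: "(\<lambda>\<omega>. fst (snd (snd (snd \<omega>))) j) = (\<lambda>\<omega>. (\<lambda>q. fst (snd (snd q)) j) (prjs i \<kappa> \<omega>))"
    by (simp add: prjs_def)
  show ?thesis
    unfolding g2_def[symmetric]
  proof (intro conjI allI impI)
    fix t h u h'
    assume as: "1 \<le> t \<and> t < T \<and> h \<in> Hset t \<and> u \<in> Uset j t \<and>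
            set_pmf (stepd P1 f W g t) \<inter> {\<omega>. fst (snd \<omega>) j = h \<and> fst (snd (snd \<omega>)) j = u} \<noteq> {} \<and>
            set_pmf (stepd P1 f W g2 t) \<inter> {\<omega>. fst (snd \<omega>) j = h \<and> fst (snd (snd \<omega>)) j = u} \<noteq> {}"
    then have M: "map_pmf (prjs i \<kappa>) (stepd P1 f W g t) = map_pmf (prjs i \<kappa>) (stepd P1 f W g2 t)"
      by (intro main) auto
    show "measure_pmf.prob (cond_pmf (stepd P1 f W g t) {\<omega>. fst (snd \<omega>) j = h \<and> fst (snd (snd \<omega>)) j = u})
              {\<omega>. snd (snd (snd (snd (snd \<omega>)))) j = h'}
        = measure_pmf.prob (cond_pmf (stepd P1 f W g2 t) {\<omega>. fst (snd \<omega>) j = h \<and> fst (snd (snd \<omega>)) j = u})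
              {\<omega>. snd (snd (snd (snd (snd \<omega>)))) j = h'}"
      unfolding evt evt2 by (rule cond_eq(1)[OF M]) (use as in \<open>simp_all only: evt, blast+\<close>)
  next
    fix t h u
    assume as: "1 \<le> t \<and> t \<le> T \<and> h \<in> Hset t \<and> u \<in> Uset j t \<and>
            set_pmf (stepd P1 f W g t) \<inter> {\<omega>. fst (snd \<omega>) j = h \<and> fst (snd (snd \<omega>)) j = u} \<noteq> {} \<and>
            set_pmf (stepd P1 f W g2 t) \<inter> {\<omega>. fst (snd \<omega>) j = h \<and> fst (snd (snd \<omega>)) j = u} \<noteq> {}"
    then have M: "map_pmf (prjs i \<kappa>) (stepd P1 f W g t) = map_pmf (prjs i \<kappa>) (stepd P1 f W g2 t)"
      by (intro main) auto
    show "measure_pmf.expectation (cond_pmf (stepd P1 f W g t) {\<omega>. fst (snd \<omega>) j = h \<and> fst (snd (snd \<omega>)) j = u})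
              (\<lambda>\<omega>. fst (snd (snd (snd \<omega>))) j)
        = measure_pmf.expectation (cond_pmf (stepd P1 f W g2 t) {\<omega>. fst (snd \<omega>) j = h \<and> fst (snd (snd \<omega>)) j = u})
              (\<lambda>\<omega>. fst (snd (snd (snd \<omega>))) j)"
      unfolding evt rew by (rule cond_eq(2)[OF M]) (use as in \<open>simp_all only: evt, blast+\<close>)
  qed
qed

end
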